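(* Let $m\ge 2$, let $C=uRM(m)$ (defined in the context), and fix any choice of base qubits $b_0,\dots,b_m$ for $C$. Then the parity labels $L(q)$ of the $2^m$ qubits $q$ are exactly all the odd-cardinality subsets of $\{0,1,\dots,m\}$, each such subset being the label of exactly one qubit.
   Context: Let $a=\lceil m/2\rceil$, $b=\lfloor m/2\rfloor$. Place $2^m$ bits (qubits) on a grid with $2^b$ rows and $2^a$ columns, positions $(i,j)$, row $1$ on top, column $1$ leftmost. Bulk checks: for $1\le i<2^b$, $1\le j<2^a$, the set $\{(i,j),(i+1,j),(i,j+1),(i+1,j+1)\}$. Boundary checks: for a line of $L=2^n$ positions $1,\dots,L$, each $s\in\{1,\dots,n-1\}$, $w=2^s$, and integer $t$ with $-L/(2w)+1\le t\le L/(2w)-1$, $S(w,t)=\{L/2-w/2+wt,\ L/2-w/2+wt+1,\ L/2+w/2+wt,\ L/2+w/2+wt+1\}$; these with $n=a$ on the top row ($j\mapsto(1,j)$) and with $n=b$ on the leftmost column ($i\mapsto(i,1)$). $C=uRM(m)$ is the set of $x\in\mathbb{F}_2^{2^m}$ with even sum over every check; it has dimension $m+1$. Base qubits and parity labels: base qubits are $m+1$ positions $b_0,\dots,b_m$ such that the map $C\to\mathbb{F}_2^{m+1}$, $x\mapsto(x_{b_0},\dots,x_{b_m})$ is a bijection. For each qubit $q$, its parity label is the unique subset $L(q)\subseteq\{0,\dots,m\}$ such that $x_q=\sum_{i\in L(q)}x_{b_i}$ for all $x\in C$. *)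

theory Defs
  imports Main
begin

definition col_exp :: "nat \<Rightarrow> nat" where "col_exp m = (m + 1) div 2"
definition row_exp :: "nat \<Rightarrow> nat" where "row_exp m = m div 2"

definition grid :: "nat \<Rightarrow> (nat \<times> nat) set" where
  "grid m = {1..2 ^ row_exp m} \<times> {1..2 ^ col_exp m}"

definition bulk_checks :: "nat \<Rightarrow> (nat \<times> nat) set set" where
  "bulk_checks m = {{(i,j), (i+1,j), (i,j+1), (i+1,j+1)} | i j.
      1 \<le> i \<and> i < 2 ^ row_exp m \<and> 1 \<le> j \<and> j < 2 ^ col_exp m}"

text \<open>Boundary checks on a line of L = 2^n positions 1..L (as integers).\<close>
definition line_checks :: "nat \<Rightarrow> int set set" where
  "line_checks n = {(let L = (2::int) ^ n; w = (2::int) ^ s in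
        {L div 2 - w div 2 + w * t, L div 2 - w div 2 + w * t + 1,
         L div 2 + w div 2 + w * t, L div 2 + w div 2 + w * t + 1}) | s t.
      1 \<le> s \<and> s \<le> n - 1 \<and>
      - ((2::int) ^ n div (2 * 2 ^ s)) + 1 \<le> t \<and> t \<le> (2::int) ^ n div (2 * 2 ^ s) - 1}"

definition boundary_checks :: "nat \<Rightarrow> (nat \<times> nat) set set" where
  "boundary_checks m =
     {(\<lambda>j. (1::nat, nat j)) ` S | S. S \<in> line_checks (col_exp m)} \<union>
     {(\<lambda>i. (nat i, 1::nat)) ` S | S. S \<in> line_checks (row_exp m)}"

definition checks :: "nat \<Rightarrow> (nat \<times> nat) set set" where
  "checks m = bulk_checks m \<union> boundary_checks m"

definition uRM :: "nat \<Rightarrow> (nat \<times> nat \<Rightarrow> bool) set" where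
  "uRM m = {x. (\<forall>p. p \<notin> grid m \<longrightarrow> \<not> x p) \<and>
               (\<forall>S \<in> checks m. even (card {p \<in> S. x p}))}"

text \<open>Base qubits b_0..b_m: positions such that x \<mapsto> (x(b_0),...,x(b_m)) is a bijection
from the code onto F_2^{m+1} (functions on {0..m}, extended by False).\<close>
definition base_qubits :: "nat \<Rightarrow> (nat \<Rightarrow> nat \<times> nat) \<Rightarrow> bool" where
  "base_qubits m b \<longleftrightarrow> (\<forall>i \<le> m. b i \<in> grid m) \<and>
     bij_betw (\<lambda>x i. if i \<le> m then x (b i) else False) (uRM m)
              {f :: nat \<Rightarrow> bool. \<forall>i > m. \<not> f i}"

text \<open>Parity label of q: the unique S \<subseteq> {0..m} with x_q = sum_{i in S} x_{b_i} over F_2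
for all codewords x.\<close>
definition is_parity_label :: "nat \<Rightarrow> (nat \<Rightarrow> nat \<times> nat) \<Rightarrow> nat \<times> nat \<Rightarrow> nat set \<Rightarrow> bool" where
  "is_parity_label m b q S \<longleftrightarrow> S \<subseteq> {0..m} \<and>
     (\<forall>x \<in> uRM m. x q = odd (card {i \<in> S. x (b i)}))"

definition parity_label :: "nat \<Rightarrow> (nat \<Rightarrow> nat \<times> nat) \<Rightarrow> nat \<times> nat \<Rightarrow> nat set" where
  "parity_label m b q = (THE S. is_parity_label m b q S)"

end

theory Submission
  imports Defs
begin


definition lc :: "nat \<Rightarrow> nat \<Rightarrow> bool" where
  "lc v p = odd ((p - 1) div 2 ^ v + (p - 1) div 2 ^ Suc v)"

lemma lc_1 [simp]: "lc v 1 = False"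
  by (simp add: lc_def)

lemma div_Suc': "Suc y div (d::nat) = y div d + (if d dvd Suc y then 1 else 0)"
  by (simp add: div_Suc dvd_eq_mod_eq_0)

lemma lc_diff:
  assumes "p \<ge> 1"
  shows "(lc v p \<noteq> lc v (p+1)) = ((2^v dvd p) \<noteq> (2^(Suc v) dvd p))"
proof -
  obtain y where y: "p = Suc y" using assms by (cases p) auto
  show ?thesis unfolding lc_def y
    using div_Suc'[of y "2^v"] div_Suc'[of y "2^Suc v"] by auto
qed

lemma dvd_shift:
  fixes P s v :: nat
  assumes "s \<ge> 1" "P mod 2^s = 2^(s-1)"
  shows "(2^v dvd P) = (2^v dvd (P + 2^s))"
proof (cases "v \<le> s")
  case True
  then have "(2::nat)^v dvd 2^s" by (simp add: le_imp_power_dvd)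
  then show ?thesis by (simp add: dvd_add_left_iff)
next
  case False
  have ne: "(2::nat)^(s-1) \<noteq> 0" by simp
  have "(2::nat)^s dvd 2^v" using False by (simp add: le_imp_power_dvd)
  moreover have "\<not> 2^s dvd P" using assms ne by (simp add: dvd_eq_mod_eq_0)
  moreover have "\<not> 2^s dvd (P + 2^s)" using assms ne by (simp add: dvd_eq_mod_eq_0)
  ultimately show ?thesis using dvd_trans by blast
qed

lemma lc_check:
  fixes P s :: nat
  assumes "P \<ge> 1" "s \<ge> 1" "P mod 2^s = 2^(s-1)"
  shows "(lc v P \<noteq> lc v (P+1)) = (lc v (P + 2^s) \<noteq> lc v (P + 2^s + 1))"
  using lc_diff[of P v] lc_diff[of "P + 2^s" v] assms
    dvd_shift[OF assms(2,3), of v] dvd_shift[OF assms(2,3), of "Suc v"]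
  by simp

lemma lc_sep:
  fixes i i' :: nat
  assumes "1 \<le> i" "1 \<le> i'" "i \<noteq> i'"
  shows "\<exists>v. lc v i \<noteq> lc v i'"
proof -
  define y where "y = i - 1"
  define y' where "y' = i' - 1"
  have yy: "y \<noteq> y'" using assms by (auto simp: y_def y'_def)
  have ex: "\<exists>k. y div 2^k = y' div 2^k"
  proof
    have "y < 2^(y+y')" "y' < 2^(y+y')"
      using less_exp[of y] less_exp[of y'] power_increasing[of _ "y+y'" "2::nat"]
      by (meson le_add1 le_add2 less_le_trans one_le_numeral)+
    then show "y div 2^(y+y') = y' div 2^(y+y')" by simp
  qed
  define k where "k = (LEAST k. y div 2^k = y' div 2^k)"
  have k1: "y div 2^k = y' div 2^k" unfolding k_def using ex by (rule LeastI_ex)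
  have k0: "k \<noteq> 0" using k1 yy by (cases k) auto
  then obtain v where v: "k = Suc v" by (cases k) auto
  have nv: "y div 2^v \<noteq> y' div 2^v" using v k_def not_less_Least[of v "\<lambda>k. y div 2^k = y' div 2^k"] by auto
  define A where "A = y div 2^v"
  define A' where "A' = y' div 2^v"
  have h: "A div 2 = A' div 2" using k1 v by (simp add: A_def A'_def div_mult2_eq power_Suc2 del: power_Suc)
  have "odd A \<noteq> odd A'"
  proof
    assume "odd A = odd A'"
    then have "A mod 2 = A' mod 2" by (metis even_iff_mod_2_eq_zero odd_iff_mod_2_eq_one)
    then have "A = A'" using h by (metis div_mult_mod_eq)
    then show False using nv A_def A'_def by simp
  qed
  then have "lc v i \<noteq> lc v i'"
    unfolding lc_def y_def[symmetric] y'_def[symmetric] A_def[symmetric] A'_def[symmetric]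
    using h by (simp add: div_mult2_eq power_Suc2 del: power_Suc add: A_def[symmetric] A'_def[symmetric])
  then show ?thesis by blast
qed



lemma line_form:
  assumes "T \<in> line_checks n"
  shows "\<exists>P s. 1 \<le> s \<and> 1 \<le> P \<and> P + 2^s + 1 \<le> 2^n \<and> P mod 2^s = 2^(s-1) \<and>
     T = {int P, int P + 1, int P + 2^s, int P + 2^s + 1}"
proof -
  obtain s t where st: "1 \<le> s" "s \<le> n - 1"
     "- ((2::int) ^ n div (2 * 2 ^ s)) + 1 \<le> t" "t \<le> (2::int) ^ n div (2 * 2 ^ s) - 1"
     and T: "T = (let L = (2::int) ^ n; w = (2::int) ^ s in
        {L div 2 - w div 2 + w * t, L div 2 - w div 2 + w * t + 1,
         L div 2 + w div 2 + w * t, L div 2 + w div 2 + w * t + 1})"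
    using assms unfolding line_checks_def by blast
  define h :: nat where "h = 2^(s-1)"
  define K :: nat where "K = 2^(n-1-s)"
  have h1: "h \<ge> 1" "K \<ge> 1" by (simp_all add: h_def K_def)
  have ws: "(2::nat)^s = 2*h" using st(1) unfolding h_def
    by (metis Suc_diff_le diff_Suc_1 power_Suc)
  have nn: "n = Suc (s + (n - 1 - s))" using st by simp
  have Ln: "(2::nat)^n = 2*h*2*K" unfolding K_def
    by (subst nn) (simp add: power_add ws)
  have wsi: "(2::int)^s = 2 * int h" using ws by (metis of_nat_numeral of_nat_mult of_nat_power)
  have Lni: "(2::int)^n = 2 * int h * 2 * int K" using Ln by (metis of_nat_numeral of_nat_mult of_nat_power)
  have d1: "(2::int)^n div (2 * 2^s) = int K" unfolding Lni wsi using h1 by simp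
  have d2: "(2::int)^n div 2 = 2 * int h * int K" unfolding Lni by simp
  have d3: "(2::int)^s div 2 = int h" unfolding wsi by simp
  define u where "u = t + int K - 1"
  have u0: "u \<ge> 0" "u \<le> 2 * int K - 2" using st(3,4) d1 by (auto simp: u_def)
  define P :: nat where "P = h + 2 * h * nat u"
  have Pi: "int P = 2 * int h * int K - int h + 2 * int h * t"
    unfolding P_def u_def using u0 by (simp add: algebra_simps u_def)
  have T2: "T = {int P, int P + 1, int P + 2^s, int P + 2^s + 1}"
    unfolding T Let_def d2 d3 Pi wsi by (simp add: algebra_simps)
  have "2 * h * nat u \<le> 2 * h * (2 * K - 2)"
    using u0 by (intro mult_left_mono) auto
  moreover have "2 * h * (2 * K - 2) = 4*h*K - 4*h" by (simp add: algebra_simps diff_mult_distrib2)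
  moreover have "4 * h \<le> 4*h*K" using h1 by simp
  moreover have "2*h*2*K = 4*h*K" by simp
  ultimately have "P + 2^s + 1 \<le> 2^n" unfolding P_def ws Ln using h1
    by linarith
  moreover have "P mod 2^s = 2^(s-1)" unfolding ws P_def using h1 by (simp add: h_def)
  moreover have "1 \<le> P" using h1 by (simp add: P_def)
  ultimately show ?thesis using T2 st(1) by blast
qed



lemma even4:
  assumes "distinct [a,b,c,d]"
  shows "even (card {q \<in> {a,b,c,d}. P q}) = ((P a \<noteq> P b) = (P c \<noteq> P d))"
proof -
  let ?f = "\<lambda>x. if P x then {x} else {}"
  have e: "{q \<in> {a,b,c,d}. P q} = ?f a \<union> ?f b \<union> ?f c \<union> ?f d"
    by auto
  have c: "card ({q \<in> {a,b,c,d}. P q}) = of_bool (P a) + of_bool (P b) + of_bool (P c) + of_bool (P d)"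
    unfolding e using assms by (cases "P a"; cases "P b"; cases "P c"; cases "P d") (auto simp: card_insert_if)
  show ?thesis unfolding c by (cases "P a"; cases "P b"; cases "P c"; cases "P d") simp_all
qed

lemma mem_grid: "(i,j) \<in> grid m \<longleftrightarrow> 1 \<le> i \<and> i \<le> 2^row_exp m \<and> 1 \<le> j \<and> j \<le> 2^col_exp m"
  by (auto simp: grid_def)

lemma check_cases:
  assumes "S \<in> checks m"
  shows "(\<exists>i j. 1 \<le> i \<and> i < 2 ^ row_exp m \<and> 1 \<le> j \<and> j < 2 ^ col_exp m \<and>
            S = {(i,j), (i+1,j), (i,j+1), (i+1,j+1)}) \<or>
         (\<exists>P s. 1 \<le> s \<and> 1 \<le> P \<and> P + 2^s + 1 \<le> 2^col_exp m \<and> P mod 2^s = 2^(s-1) \<and>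
            S = {(1,P), (1,P+1), (1,P+2^s), (1,P+2^s+1)}) \<or>
         (\<exists>P s. 1 \<le> s \<and> 1 \<le> P \<and> P + 2^s + 1 \<le> 2^row_exp m \<and> P mod 2^s = 2^(s-1) \<and>
            S = {(P,1), (P+1,1), (P+2^s,1), (P+2^s+1,1)})"
proof -
  have "S \<in> bulk_checks m \<or> S \<in> boundary_checks m" using assms by (simp add: checks_def)
  moreover
  { assume "S \<in> bulk_checks m"
    then obtain i j where "1 \<le> i \<and> i < 2 ^ row_exp m \<and> 1 \<le> j \<and> j < 2 ^ col_exp m \<and>
            S = {(i,j), (i+1,j), (i,j+1), (i+1,j+1)}" unfolding bulk_checks_def by auto
    then have ?thesis by (intro disjI1 exI) }
  moreover
  { assume "S \<in> boundary_checks m"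
    then consider (t) T where "T \<in> line_checks (col_exp m)" "S = (\<lambda>j. (1::nat, nat j)) ` T"
      | (l) T where "T \<in> line_checks (row_exp m)" "S = (\<lambda>i. (nat i, 1::nat)) ` T"
      unfolding boundary_checks_def by blast
    then have ?thesis
    proof cases
      case t
      then obtain P s where "1 \<le> s \<and> 1 \<le> P \<and> P + 2^s + 1 \<le> 2^col_exp m \<and> P mod 2^s = 2^(s-1)"
        and T: "T = {int P, int P + 1, int P + 2^s, int P + 2^s + 1}" using line_form by blast
      moreover have "S = {(1,P), (1,P+1), (1,P+2^s), (1,P+2^s+1)}"
        unfolding t(2) T by (simp add: nat_add_distrib nat_power_eq)
      ultimately show ?thesis by - (rule disjI2, rule disjI1, blast)
    next
      case l
      then obtain P s where "1 \<le> s \<and> 1 \<le> P \<and> P + 2^s + 1 \<le> 2^row_exp m \<and> P mod 2^s = 2^(s-1)"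
        and T: "T = {int P, int P + 1, int P + 2^s, int P + 2^s + 1}" using line_form by blast
      moreover have "S = {(P,1), (P+1,1), (P+2^s,1), (P+2^s+1,1)}"
        unfolding l(2) T by (simp add: nat_add_distrib nat_power_eq)
      ultimately show ?thesis by - (rule disjI2, rule disjI2, blast)
    qed }
  ultimately show ?thesis by argo
qed

lemma finite_check: "S \<in> checks m \<Longrightarrow> finite S"
  using check_cases[of S m] by auto

lemma two_pow_ge2: "(s::nat) \<ge> 1 \<Longrightarrow> (2::nat) \<le> 2^s"
  by (metis one_le_numeral power_increasing power_one_right)

lemma in_uRM_I:
  assumes off: "\<And>p. p \<notin> grid m \<Longrightarrow> \<not> x p"
  and bulk: "\<And>i j. 1 \<le> i \<Longrightarrow> i < 2 ^ row_exp m \<Longrightarrow> 1 \<le> j \<Longrightarrow> j < 2 ^ col_exp m \<Longrightarrow>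
      (x (i,j) \<noteq> x (i+1,j)) = (x (i,j+1) \<noteq> x (i+1,j+1))"
  and top: "\<And>P s. 1 \<le> s \<Longrightarrow> 1 \<le> P \<Longrightarrow> P + 2^s + 1 \<le> 2^col_exp m \<Longrightarrow> P mod 2^s = 2^(s-1) \<Longrightarrow>
      (x (1,P) \<noteq> x (1,P+1)) = (x (1,P+2^s) \<noteq> x (1,P+2^s+1))"
  and left: "\<And>P s. 1 \<le> s \<Longrightarrow> 1 \<le> P \<Longrightarrow> P + 2^s + 1 \<le> 2^row_exp m \<Longrightarrow> P mod 2^s = 2^(s-1) \<Longrightarrow>
      (x (P,1) \<noteq> x (P+1,1)) = (x (P+2^s,1) \<noteq> x (P+2^s+1,1))"
  shows "x \<in> uRM m"
  unfolding uRM_def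
proof (intro CollectI conjI allI impI ballI)
  fix p assume "p \<notin> grid m" then show "\<not> x p" by (rule off)
next
  fix S assume "S \<in> checks m"
  from check_cases[OF this] show "even (card {p \<in> S. x p})"
  proof (elim disjE exE conjE)
    fix i j assume h: "1 \<le> i" "i < 2 ^ row_exp m" "1 \<le> j" "j < 2 ^ col_exp m"
      and S: "S = {(i,j), (i+1,j), (i,j+1), (i+1,j+1)}"
    show ?thesis unfolding S by (subst even4) (use bulk[OF h] in auto)
  next
    fix P s assume h: "1 \<le> s" "1 \<le> P" "P + 2^s + 1 \<le> 2^col_exp m" "P mod 2^s = 2^(s-1)"
      and S: "S = {(1,P), (1,P+1), (1,P+2^s), (1,P+2^s+1)}"
    have "2 \<le> (2::nat)^s" using two_pow_ge2 h(1) .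
    then show ?thesis unfolding S by (subst even4) (use top[OF h] in auto)
  next
    fix P s assume h: "1 \<le> s" "1 \<le> P" "P + 2^s + 1 \<le> 2^row_exp m" "P mod 2^s = 2^(s-1)"
      and S: "S = {(P,1), (P+1,1), (P+2^s,1), (P+2^s+1,1)}"
    have "2 \<le> (2::nat)^s" using two_pow_ge2 h(1) .
    then show ?thesis unfolding S by (subst even4) (use left[OF h] in auto)
  qed
qed


lemma ones_in: "(\<lambda>p. p \<in> grid m) \<in> uRM m"
proof (rule in_uRM_I)
  fix i j :: nat assume "1 \<le> i" "i < 2 ^ row_exp m" "1 \<le> j" "j < 2 ^ col_exp m"
  then show "(((i,j) \<in> grid m) \<noteq> ((i+1,j) \<in> grid m)) = (((i,j+1) \<in> grid m) \<noteq> ((i+1,j+1) \<in> grid m))"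
    unfolding mem_grid by linarith
next
  fix P s :: nat assume h: "1 \<le> s" "1 \<le> P" "P + 2^s + 1 \<le> 2^col_exp m" "P mod 2^s = 2^(s-1)"
  have "(1::nat) \<le> 2 ^ row_exp m" by simp
  then show "(((1,P) \<in> grid m) \<noteq> ((1,P+1) \<in> grid m)) = (((1,P+2^s) \<in> grid m) \<noteq> ((1,P+2^s+1) \<in> grid m))"
    unfolding mem_grid using h by linarith
next
  fix P s :: nat assume h: "1 \<le> s" "1 \<le> P" "P + 2^s + 1 \<le> 2^row_exp m" "P mod 2^s = 2^(s-1)"
  have "(1::nat) \<le> 2 ^ col_exp m" by simp
  then show "(((P,1) \<in> grid m) \<noteq> ((P+1,1) \<in> grid m)) = (((P+2^s,1) \<in> grid m) \<noteq> ((P+2^s+1,1) \<in> grid m))"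
    unfolding mem_grid using h by linarith
qed simp


definition colw :: "nat \<Rightarrow> nat \<Rightarrow> nat \<times> nat \<Rightarrow> bool" where
  "colw m v p = (p \<in> grid m \<and> lc v (snd p))"
definition roww :: "nat \<Rightarrow> nat \<Rightarrow> nat \<times> nat \<Rightarrow> bool" where
  "roww m v p = (p \<in> grid m \<and> lc v (fst p))"

lemma lc_Suc0 [simp]: "lc v (Suc 0) = False"
  by (simp add: lc_def)

lemma colw_in: "colw m v \<in> uRM m"
proof (rule in_uRM_I)
  fix i j :: nat assume h: "1 \<le> i" "i < 2 ^ row_exp m" "1 \<le> j" "j < 2 ^ col_exp m"
  then have "(i,j) \<in> grid m" "(i+1,j) \<in> grid m" "(i,j+1) \<in> grid m" "(i+1,j+1) \<in> grid m"
    unfolding mem_grid by linarith+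
  then show "(colw m v (i,j) \<noteq> colw m v (i+1,j)) = (colw m v (i,j+1) \<noteq> colw m v (i+1,j+1))"
    unfolding colw_def by simp
next
  fix P s :: nat assume h: "1 \<le> s" "1 \<le> P" "P + 2^s + 1 \<le> 2^col_exp m" "P mod 2^s = 2^(s-1)"
  have "(1::nat) \<le> 2 ^ row_exp m" by simp
  then have "(1,P) \<in> grid m" "(1,P+1) \<in> grid m" "(1,P+2^s) \<in> grid m" "(1,P+2^s+1) \<in> grid m"
    unfolding mem_grid using h by linarith+
  then show "(colw m v (1,P) \<noteq> colw m v (1,P+1)) = (colw m v (1,P+2^s) \<noteq> colw m v (1,P+2^s+1))"
    unfolding colw_def using lc_check[OF h(2,1,4), of v] by simp
next
  fix P s :: nat
  show "(colw m v (P,1) \<noteq> colw m v (P+1,1)) = (colw m v (P+2^s,1) \<noteq> colw m v (P+2^s+1,1))"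
    unfolding colw_def by simp
qed (simp add: colw_def)

lemma roww_in: "roww m v \<in> uRM m"
proof (rule in_uRM_I)
  fix i j :: nat assume h: "1 \<le> i" "i < 2 ^ row_exp m" "1 \<le> j" "j < 2 ^ col_exp m"
  then have "(i,j) \<in> grid m" "(i+1,j) \<in> grid m" "(i,j+1) \<in> grid m" "(i+1,j+1) \<in> grid m"
    unfolding mem_grid by linarith+
  then show "(roww m v (i,j) \<noteq> roww m v (i+1,j)) = (roww m v (i,j+1) \<noteq> roww m v (i+1,j+1))"
    unfolding roww_def by simp
next
  fix P s :: nat assume h: "1 \<le> s" "1 \<le> P" "P + 2^s + 1 \<le> 2^row_exp m" "P mod 2^s = 2^(s-1)"
  have "(1::nat) \<le> 2 ^ col_exp m" by simp
  then have "(P,1) \<in> grid m" "(P+1,1) \<in> grid m" "(P+2^s,1) \<in> grid m" "(P+2^s+1,1) \<in> grid m"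
    unfolding mem_grid using h by linarith+
  then show "(roww m v (P,1) \<noteq> roww m v (P+1,1)) = (roww m v (P+2^s,1) \<noteq> roww m v (P+2^s+1,1))"
    unfolding roww_def using lc_check[OF h(2,1,4), of v] by simp
next
  fix P s :: nat
  show "(roww m v (1,P) \<noteq> roww m v (1,P+1)) = (roww m v (1,P+2^s) \<noteq> roww m v (1,P+2^s+1))"
    unfolding roww_def by simp
qed (simp add: roww_def)

lemma separate:
  assumes "q \<in> grid m" "q' \<in> grid m" "q \<noteq> q'"
  shows "\<exists>x \<in> uRM m. x q \<noteq> x q'"
proof -
  obtain i j i' j' where q: "q = (i,j)" "q' = (i',j')" by (cases q, cases q') auto
  have r: "1 \<le> i" "1 \<le> i'" "1 \<le> j" "1 \<le> j'" using assms unfolding q mem_grid by auto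
  show ?thesis
  proof (cases "i = i'")
    case True
    then have "j \<noteq> j'" using assms q by auto
    then obtain v where "lc v j \<noteq> lc v j'" using lc_sep[of j j'] r by blast
    then have "colw m v q \<noteq> colw m v q'" using assms q by (simp add: colw_def)
    then show ?thesis using colw_in[of m v] by blast
  next
    case False
    then obtain v where "lc v i \<noteq> lc v i'" using lc_sep[of i i'] r by blast
    then have "roww m v q \<noteq> roww m v q'" using assms q by (simp add: roww_def)
    then show ?thesis using roww_in[of m v] by blast
  qed
qed



lemma xor_card:
  assumes "finite S"
  shows "odd (card {p \<in> S. x p \<noteq> y p}) = (odd (card {p \<in> S. x p}) \<noteq> odd (card {p \<in> S. y p}))"
  using assms
proof (induction S rule: finite_induct)
  case empty
  then show ?case by simp
next
  case (insert a S)
  have e: "\<And>Q. {p \<in> insert a S. Q p} = (if Q a then insert a {p \<in> S. Q p} else {p \<in> S. Q p})"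
    by auto
  have c: "\<And>Q. card {p \<in> insert a S. Q p} = (if Q a then Suc (card {p \<in> S. Q p}) else card {p \<in> S. Q p})"
    unfolding e using insert(1,2) by simp
  show ?case unfolding c using insert(3) by (cases "x a"; cases "y a") auto
qed

lemma uRM_xor:
  assumes "x \<in> uRM m" "y \<in> uRM m"
  shows "(\<lambda>p. x p \<noteq> y p) \<in> uRM m"
  unfolding uRM_def
proof (intro CollectI conjI allI impI ballI)
  fix p assume "p \<notin> grid m" moreover have "\<forall>p. p \<notin> grid m \<longrightarrow> \<not> x p" "\<forall>p. p \<notin> grid m \<longrightarrow> \<not> y p"
    using assms unfolding uRM_def by blast+
  ultimately show "\<not> (x p \<noteq> y p)" by blast
next
  fix S assume S: "S \<in> checks m"
  have "even (card {p \<in> S. x p})" "even (card {p \<in> S. y p})" using assms S unfolding uRM_def by auto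
  then show "even (card {p \<in> S. x p \<noteq> y p})" using xor_card[OF finite_check[OF S], of x y] by blast
qed

lemma zero_in: "(\<lambda>_. False) \<in> uRM m"
  unfolding uRM_def by simp

lemma card_grid: "card (grid m) = 2 ^ m"
proof -
  have "row_exp m + col_exp m = m" unfolding row_exp_def col_exp_def by simp
  then show ?thesis unfolding grid_def by (simp add: card_cartesian_product power_add[symmetric])
qed

lemma card_odd_sets: "card {S. S \<subseteq> {0..m} \<and> odd (card S)} = 2 ^ m"
proof -
  define g where "g A = (if odd (card A) then A else insert 0 A)" for A :: "nat set"
  have "bij_betw g (Pow {1..m}) {S. S \<subseteq> {0..m} \<and> odd (card S)}"
  proof (rule bij_betw_imageI)
    show "inj_on g (Pow {1..m})"
    proof (rule inj_onI)
      fix A A' assume "A \<in> Pow {1..m}" "A' \<in> Pow {1..m}" "g A = g A'"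
      then have "g A - {0} = g A' - {0}" by simp
      moreover have "g A - {0} = A" "g A' - {0} = A'" using \<open>A \<in> Pow {1..m}\<close> \<open>A' \<in> Pow {1..m}\<close>
        unfolding g_def by auto
      ultimately show "A = A'" by simp
    qed
  next
    show "g ` Pow {1..m} = {S. S \<subseteq> {0..m} \<and> odd (card S)}"
    proof
      show "g ` Pow {1..m} \<subseteq> {S. S \<subseteq> {0..m} \<and> odd (card S)}"
      proof
        fix S assume "S \<in> g ` Pow {1..m}"
        then obtain A where A: "A \<subseteq> {1..m}" "S = g A" by auto
        have "finite A" "0 \<notin> A" using A(1) finite_subset by auto
        then show "S \<in> {S. S \<subseteq> {0..m} \<and> odd (card S)}" using A unfolding g_def by auto
      qed
    next
      show "{S. S \<subseteq> {0..m} \<and> odd (card S)} \<subseteq> g ` Pow {1..m}"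
      proof
        fix S assume S: "S \<in> {S. S \<subseteq> {0..m} \<and> odd (card S)}"
        define A where "A = S - {0}"
        have fS: "finite S" using S finite_subset by auto
        have A1: "A \<in> Pow {1..m}" using S unfolding A_def by auto
        have "g A = S"
        proof (cases "0 \<in> S")
          case True
          then have "card A = card S - 1" "S = insert 0 A" using fS unfolding A_def by auto
          moreover have "card S \<ge> 1" using S by (cases "card S") auto
          ultimately show ?thesis using S unfolding g_def by auto
        next
          case False
          then show ?thesis using S unfolding g_def A_def by auto
        qed
        then show "S \<in> g ` Pow {1..m}" using A1 by blast
      qed
    qed
  qed
  then have "card {S. S \<subseteq> {0..m} \<and> odd (card S)} = card (Pow {1..m})"
    by (simp add: bij_betw_same_card)
  then show ?thesis by (simp add: card_Pow)
qed



theorem lemma2: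
  fixes m :: nat and b :: "nat \<Rightarrow> nat \<times> nat"
  assumes "m \<ge> 2" and "base_qubits m b"
  shows "(\<forall>q \<in> grid m. \<exists>!S. is_parity_label m b q S) \<and>
         bij_betw (parity_label m b) (grid m) {S. S \<subseteq> {0..m} \<and> odd (card S)}"
proof -
  define C where "C = uRM m"
  define F where "F = {f :: nat \<Rightarrow> bool. \<forall>i > m. \<not> f i}"
  define \<phi> where "\<phi> = (\<lambda>x i. if i \<le> m then x (b i) else False)"
  have bq0: "\<forall>i \<le> m. b i \<in> grid m"
    using assms(2) unfolding base_qubits_def by (rule conjunct1)
  then have bq: "\<And>i. i \<le> m \<Longrightarrow> b i \<in> grid m" by simp
  have bij: "bij_betw \<phi> C F"
    using assms(2) unfolding base_qubits_def C_def F_def \<phi>_def by (rule conjunct2)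
  define \<psi> where "\<psi> = the_inv_into C \<phi>"
  have inj: "inj_on \<phi> C" using bij by (simp add: bij_betw_def)
  have psiC: "\<And>f. f \<in> F \<Longrightarrow> \<psi> f \<in> C"
    unfolding \<psi>_def using bij_betwE[OF bij_betw_the_inv_into[OF bij]] by blast
  have phipsi: "\<And>f. f \<in> F \<Longrightarrow> \<phi> (\<psi> f) = f"
    unfolding \<psi>_def by (rule f_the_inv_into_f_bij_betw[OF bij])
  have psiphi: "\<And>x. x \<in> C \<Longrightarrow> \<psi> (\<phi> x) = x"
    unfolding \<psi>_def by (rule the_inv_into_f_f[OF inj])
  have psi_xor: "\<psi> (\<lambda>i. f i \<noteq> g i) = (\<lambda>p. \<psi> f p \<noteq> \<psi> g p)" if fg: "f \<in> F" "g \<in> F" for f g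
  proof -
    define z where "z = (\<lambda>p. \<psi> f p \<noteq> \<psi> g p)"
    have zC: "z \<in> C" unfolding z_def C_def using uRM_xor psiC fg unfolding C_def by blast
    have "\<phi> z = (\<lambda>i. f i \<noteq> g i)"
    proof
      fix i
      have "f i = \<phi> (\<psi> f) i" "g i = \<phi> (\<psi> g) i" using phipsi fg by auto
      then show "\<phi> z i = (f i \<noteq> g i)" unfolding z_def \<phi>_def by auto
    qed
    then show ?thesis using psiphi[OF zC] z_def by simp
  qed
  have zeroC: "(\<lambda>_. False) \<in> C" unfolding C_def by (rule zero_in)
  have psi0: "\<psi> (\<lambda>_. False) = (\<lambda>_. False)"
  proof -
    have "\<phi> (\<lambda>_. False) = (\<lambda>_. False)" unfolding \<phi>_def by auto
    then show ?thesis using psiphi[OF zeroC] by simp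
  qed
  define \<delta> where "\<delta> i = (\<lambda>k::nat. k = i)" for i
  have deltaF: "\<And>i. i \<le> m \<Longrightarrow> \<delta> i \<in> F" unfolding \<delta>_def F_def by auto
  have indF: "\<And>A. A \<subseteq> {0..m} \<Longrightarrow> (\<lambda>k. k \<in> A) \<in> F" unfolding F_def by auto
  have expand: "\<psi> (\<lambda>k. k \<in> A) q = odd (card {i \<in> A. \<psi> (\<delta> i) q})"
    if "finite A" "A \<subseteq> {0..m}" for A q
    using that
  proof (induction A rule: finite_induct)
    case empty
    then show ?case using psi0 by simp
  next
    case (insert a A)
    have e: "(\<lambda>k. k \<in> insert a A) = (\<lambda>k. (k \<in> A) \<noteq> \<delta> a k)"
      using insert(2) unfolding \<delta>_def by auto
    have "\<psi> (\<lambda>k. k \<in> insert a A) q = (\<psi> (\<lambda>k. k \<in> A) q \<noteq> \<psi> (\<delta> a) q)"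
      proof -
      have "A \<subseteq> {0..m}" "a \<le> m" using insert(4) by auto
      then show ?thesis unfolding e using psi_xor[OF indF deltaF, of A a] by simp
    qed
    also have "\<dots> = (odd (card {i \<in> A. \<psi> (\<delta> i) q}) \<noteq> \<psi> (\<delta> a) q)"
      using insert by simp
    also have "\<dots> = odd (card {i \<in> insert a A. \<psi> (\<delta> i) q})"
    proof -
      have "{i \<in> insert a A. \<psi> (\<delta> i) q} = (if \<psi> (\<delta> a) q then insert a {i \<in> A. \<psi> (\<delta> i) q} else {i \<in> A. \<psi> (\<delta> i) q})"
        by auto
      then show ?thesis using insert(1,2) by auto
    qed
    finally show ?case .
  qed
  define lab where "lab q = {i. i \<le> m \<and> \<psi> (\<delta> i) q}" for q
  have lab_ok: "is_parity_label m b q (lab q)" for q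
    unfolding is_parity_label_def
  proof (intro conjI ballI)
    show "lab q \<subseteq> {0..m}" unfolding lab_def by auto
  next
    fix x assume x: "x \<in> uRM m"
    define A where "A = {i. i \<le> m \<and> x (b i)}"
    have px: "\<phi> x = (\<lambda>k. k \<in> A)" unfolding \<phi>_def A_def by auto
    have "\<psi> (\<phi> x) = x" using psiphi x unfolding C_def by simp
    then have "x = \<psi> (\<lambda>k. k \<in> A)" unfolding px by simp
    then have xq: "x q = \<psi> (\<lambda>k. k \<in> A) q" by (rule fun_cong)
    have fA: "finite A" "A \<subseteq> {0..m}" unfolding A_def by auto
    have "x q = odd (card {i \<in> A. \<psi> (\<delta> i) q})"
      unfolding xq by (rule expand[OF fA])
    moreover have "{i \<in> A. \<psi> (\<delta> i) q} = {i \<in> lab q. x (b i)}" unfolding A_def lab_def by auto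
    ultimately show "x q = odd (card {i \<in> lab q. x (b i)})" by simp
  qed
  have lab_uniq: "S = lab q" if S: "is_parity_label m b q S" for q S
  proof -
    have Ssub: "S \<subseteq> {0..m}" using S unfolding is_parity_label_def by (rule conjunct1)
    have Sx: "\<forall>x \<in> uRM m. x q = odd (card {i \<in> S. x (b i)})"
      using S unfolding is_parity_label_def by (rule conjunct2)
    have key: "k \<in> S \<longleftrightarrow> \<psi> (\<delta> k) q" if k: "k \<le> m" for k
    proof -
      have xC: "\<psi> (\<delta> k) \<in> uRM m" using psiC deltaF k unfolding C_def by blast
      have hp: "\<phi> (\<psi> (\<delta> k)) = \<delta> k" using phipsi deltaF k by blast
      have xb: "\<psi> (\<delta> k) (b i) = (i = k)" if "i \<le> m" for i
      proof -
        have "\<phi> (\<psi> (\<delta> k)) i = \<delta> k i" using hp by simp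
        then show ?thesis using that unfolding \<phi>_def \<delta>_def by simp
      qed
      have "{i \<in> S. \<psi> (\<delta> k) (b i)} = {i \<in> S. i = k}"
      proof (rule Collect_cong)
        fix i show "(i \<in> S \<and> \<psi> (\<delta> k) (b i)) = (i \<in> S \<and> i = k)"
          using Ssub xb[of i] by auto
      qed
      also have "\<dots> = (if k \<in> S then {k} else {})" by auto
      finally have e: "{i \<in> S. \<psi> (\<delta> k) (b i)} = (if k \<in> S then {k} else {})" .
      have "\<psi> (\<delta> k) q = odd (card {i \<in> S. \<psi> (\<delta> k) (b i)})"
        using Sx xC by blast
      then show ?thesis unfolding e by (cases "k \<in> S") simp_all
    qed
    show ?thesis
    proof
      show "S \<subseteq> lab q" using Ssub key unfolding lab_def by auto
      show "lab q \<subseteq> S" using key unfolding lab_def by auto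
    qed
  qed
  have lab_x: "\<And>x q. x \<in> uRM m \<Longrightarrow> x q = odd (card {i \<in> lab q. x (b i)})"
    using lab_ok unfolding is_parity_label_def by blast
  have uniq: "\<exists>!S. is_parity_label m b q S" for q
  proof (rule ex1I)
    show "is_parity_label m b q (lab q)" by (rule lab_ok)
  next
    fix S assume "is_parity_label m b q S" then show "S = lab q" by (rule lab_uniq)
  qed
  have pl: "parity_label m b q = lab q" for q
    unfolding parity_label_def
  proof (rule the_equality)
    show "is_parity_label m b q (lab q)" by (rule lab_ok)
  next
    fix S assume "is_parity_label m b q S" then show "S = lab q" by (rule lab_uniq)
  qed
  have ones: "(\<lambda>p. p \<in> grid m) \<in> uRM m" by (rule ones_in)
  have lab_odd: "odd (card (lab q))" if q: "q \<in> grid m" for q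
  proof -
    have "(q \<in> grid m) = odd (card {i \<in> lab q. b i \<in> grid m})"
      by (rule lab_x[OF ones])
    moreover have "{i \<in> lab q. b i \<in> grid m} = lab q" using bq unfolding lab_def by auto
    ultimately show ?thesis using q by simp
  qed
  have injl: "inj_on lab (grid m)"
  proof (rule inj_onI)
    fix q q' assume q: "q \<in> grid m" "q' \<in> grid m" and eq: "lab q = lab q'"
    show "q = q'"
    proof (rule ccontr)
      assume "q \<noteq> q'"
      then obtain x where x: "x \<in> uRM m" "x q \<noteq> x q'" using separate q by blast
      have "x q = odd (card {i \<in> lab q. x (b i)})" "x q' = odd (card {i \<in> lab q'. x (b i)})"
        by (rule lab_x[OF x(1)])+
      then show False using x(2) eq by simp
    qed
  qed
  define Odds where "Odds = {S. S \<subseteq> {0..m} \<and> odd (card S)}"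
  have sub: "lab ` grid m \<subseteq> Odds"
  proof
    fix S assume "S \<in> lab ` grid m"
    then obtain q where q: "q \<in> grid m" "S = lab q" by blast
    have "lab q \<subseteq> {0..m}" unfolding lab_def by auto
    then show "S \<in> Odds" unfolding Odds_def using q lab_odd[OF q(1)] by simp
  qed
  have "card (lab ` grid m) = 2 ^ m"
    using card_image[OF injl] card_grid by simp
  then have ceq: "card (lab ` grid m) = card Odds"
    using card_odd_sets unfolding Odds_def by simp
  have "finite Odds" unfolding Odds_def by (rule finite_subset[of _ "Pow {0..m}"]) auto
  then have "lab ` grid m = Odds" using sub ceq card_subset_eq by blast
  then have "bij_betw lab (grid m) Odds" using injl by (simp add: bij_betw_def)
  moreover have "parity_label m b = lab" using pl by (rule ext)
  ultimately show ?thesis using uniq unfolding Odds_def by simp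
qed

end
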